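(* Let $\vartheta_1,\ldots,\vartheta_t$ be real numbers, $\beta,\delta,\kappa,\lambda$ positive real numbers with $\kappa\le 1/t$, and $\alpha,\gamma$ real numbers. Assume there is a sequence $(P_n)_{n\ge0}$ of polynomials in $\mathbb{Z}[X_1,\ldots,X_t]$, with $P_n$ of total degree at most $\delta n^{\kappa}+o(n^{\kappa})$ and length at most $e^{\beta n+o(n)}$, such that $$e^{-\lambda n^{1+t\kappa}-(\alpha+o(1))n}\le|P_n(\vartheta_1,\ldots,\vartheta_t)|\le e^{-\lambda n^{1+t\kappa}-(\gamma+o(1))n}.$$ Then $\lambda(1-2\delta^t/t!)\le \delta^t(\alpha+\beta-\gamma)/t!$ when $\kappa=1/t$, and $\lambda\le\delta^t(\alpha+\beta-\gamma)/t!$ when $\kappa<1/t$.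
   Context: The length of a polynomial with integer coefficients is the sum of the absolute values of its coefficients. Little-$o$ terms are as $n\to\infty$. *)

theory Defs
  imports Complex_Main "HOL-Library.Landau_Symbols"
begin

text \<open>Multivariate integer polynomials in the variables X_0,...,X_(t-1), represented by
  their coefficient function on exponent vectors (nat => nat).\<close>

type_synonym mpoly_int = "(nat \<Rightarrow> nat) \<Rightarrow> int"

definition msupp :: "mpoly_int \<Rightarrow> (nat \<Rightarrow> nat) set" where
  "msupp P = {e. P e \<noteq> 0}"

definition is_mpoly :: "nat \<Rightarrow> mpoly_int \<Rightarrow> bool" where
  "is_mpoly t P \<longleftrightarrow> finite (msupp P) \<and> (\<forall>e\<in>msupp P. \<forall>i\<ge>t. e i = 0)"

definition total_deg_le :: "nat \<Rightarrow> mpoly_int \<Rightarrow> real \<Rightarrow> bool" where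
  "total_deg_le t P D \<longleftrightarrow> (\<forall>e\<in>msupp P. real (\<Sum>i<t. e i) \<le> D)"

definition mpoly_length :: "mpoly_int \<Rightarrow> real" where
  "mpoly_length P = (\<Sum>e\<in>msupp P. real_of_int \<bar>P e\<bar>)"

definition mpoly_eval :: "nat \<Rightarrow> mpoly_int \<Rightarrow> (nat \<Rightarrow> real) \<Rightarrow> real" where
  "mpoly_eval t P \<theta> = (\<Sum>e\<in>msupp P. real_of_int (P e) * (\<Prod>i<t. \<theta> i ^ e i))"

end

theory Submission
  imports Defs "Jordan_Normal_Form.Determinant"
begin

definition dl :: "nat \<Rightarrow> 'a list \<Rightarrow> 'a list" where
  "dl i xs = take i xs @ drop (Suc i) xs"

lemma length_dl[simp]: "i < length xs \<Longrightarrow> length (dl i xs) = length xs - 1"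
  unfolding dl_def by simp

lemma nth_dl: "i < length xs \<Longrightarrow> k < length xs - 1 \<Longrightarrow>
   dl i xs ! k = (if k < i then xs ! k else xs ! Suc k)"
  unfolding dl_def by (auto simp: nth_append min_def)

lemma dl_Suc_Cons[simp]: "dl (Suc j) (x # xs) = x # dl j xs"
  unfolding dl_def by simp

lemma dl_0_Cons[simp]: "dl 0 (x # xs) = xs"
  unfolding dl_def by simp

lemma dl_map: "dl j (map f xs) = map f (dl j xs)"
  unfolding dl_def by (simp add: take_map drop_map)

lemma set_dl: "set (dl j xs) \<subseteq> set xs"
  unfolding dl_def by (auto dest: in_set_takeD in_set_dropD)

lemma distinct_dl: "distinct xs \<Longrightarrow> distinct (dl j xs)"
  unfolding dl_def
  by (simp add: set_take_disj_set_drop_if_distinct)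

definition Mt :: "('r \<Rightarrow> 'c \<Rightarrow> 'a) \<Rightarrow> 'r list \<Rightarrow> 'c list \<Rightarrow> 'a mat" where
  "Mt ent rs cs = mat (length rs) (length cs) (\<lambda>(i,j). ent (rs ! i) (cs ! j))"

lemma Mt_carrier: "Mt ent rs cs \<in> carrier_mat (length rs) (length cs)"
  unfolding Mt_def by auto

lemma index_Mt[simp]: "i < length rs \<Longrightarrow> j < length cs \<Longrightarrow> Mt ent rs cs $$ (i,j) = ent (rs ! i) (cs ! j)"
  unfolding Mt_def by simp

lemma mat_delete_Mt:
  assumes "i < length rs" "j < length cs"
  shows "mat_delete (Mt ent rs cs) i j = Mt ent (dl i rs) (dl j cs)"
proof (rule eq_matI)
  fix i' j' assume a: "i' < dim_row (Mt ent (dl i rs) (dl j cs))" "j' < dim_col (Mt ent (dl i rs) (dl j cs))"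
  hence a': "i' < length rs - 1" "j' < length cs - 1" using assms by (simp_all add: Mt_def)
  have "mat_delete (Mt ent rs cs) i j $$ (i', j') = Mt ent rs cs $$ (if i' < i then i' else Suc i', if j' < j then j' else Suc j')"
    unfolding mat_delete_def using a' by (simp add: Mt_def)
  also have "\<dots> = ent (dl i rs ! i') (dl j cs ! j')"
    using a' assms by (simp add: nth_dl)
  finally show "mat_delete (Mt ent rs cs) i j $$ (i', j') = Mt ent (dl i rs) (dl j cs) $$ (i', j')"
    using a' assms by simp
qed (use assms in \<open>simp_all add: Mt_def\<close>)


lemma laplace_Mt_row0:
  fixes ent :: "'r \<Rightarrow> 'c \<Rightarrow> 'a :: comm_ring_1"
  assumes "length cs = Suc (length rs)"
  shows "det (Mt ent (a # rs) cs) =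
     (\<Sum>j<length cs. ent a (cs ! j) * ((-1) ^ j * det (Mt ent rs (dl j cs))))"
proof -
  have "det (Mt ent (a # rs) cs) = (\<Sum>j<length cs. Mt ent (a # rs) cs $$ (0,j) * cofactor (Mt ent (a # rs) cs) 0 j)"
    by (rule laplace_expansion_row) (use Mt_carrier[of ent "a#rs" cs] assms in auto)
  also have "\<dots> = (\<Sum>j<length cs. ent a (cs ! j) * ((-1) ^ j * det (Mt ent rs (dl j cs))))"
    by (rule sum.cong, simp) (use assms in \<open>auto simp: cofactor_def mat_delete_Mt\<close>)
  finally show ?thesis .
qed

lemma laplace_Mt_col0:
  fixes ent :: "'r \<Rightarrow> 'c \<Rightarrow> 'a :: comm_ring_1"
  assumes "length rs = Suc (length cs)"
  shows "det (Mt ent rs (c # cs)) =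
     (\<Sum>i<length rs. ent (rs ! i) c * ((-1) ^ i * det (Mt ent (dl i rs) cs)))"
proof -
  have "det (Mt ent rs (c # cs)) = (\<Sum>i<length rs. Mt ent rs (c # cs) $$ (i,0) * cofactor (Mt ent rs (c # cs)) i 0)"
    by (rule laplace_expansion_column) (use Mt_carrier[of ent rs "c#cs"] assms in auto)
  also have "\<dots> = (\<Sum>i<length rs. ent (rs ! i) c * ((-1) ^ i * det (Mt ent (dl i rs) cs)))"
    by (rule sum.cong, simp) (use assms in \<open>auto simp: cofactor_def mat_delete_Mt\<close>)
  finally show ?thesis .
qed

lemma det_Mt_col_linear:
  fixes ent :: "'r \<Rightarrow> 'c \<Rightarrow> 'a :: comm_ring_1"
  assumes "length rs = Suc (length cs)" "finite S"
    and lin: "\<And>r. r \<in> set rs \<Longrightarrow> ent r c = (\<Sum>e\<in>S. w e * ent r (h e))"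
  shows "det (Mt ent rs (c # cs)) = (\<Sum>e\<in>S. w e * det (Mt ent rs (h e # cs)))"
proof -
  have "det (Mt ent rs (c # cs)) =
     (\<Sum>i<length rs. (\<Sum>e\<in>S. w e * ent (rs ! i) (h e)) * ((-1) ^ i * det (Mt ent (dl i rs) cs)))"
    unfolding laplace_Mt_col0[OF assms(1)] by (rule sum.cong) (auto simp: lin)
  also have "\<dots> = (\<Sum>e\<in>S. w e * (\<Sum>i<length rs. ent (rs ! i) (h e) * ((-1) ^ i * det (Mt ent (dl i rs) cs))))"
    by (simp only: sum_distrib_right sum_distrib_left mult.assoc sum.swap[where A="{..<length rs}"])
  also have "\<dots> = (\<Sum>e\<in>S. w e * det (Mt ent rs (h e # cs)))"
    by (simp only: laplace_Mt_col0[OF assms(1)])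
  finally show ?thesis .
qed

lemma det_Mt_identical_rows:
  assumes "length rs = length cs" "i < length rs" "j < length rs" "i \<noteq> j" "rs ! i = rs ! j"
  shows "det (Mt ent rs cs) = 0"
proof (rule det_identical_rows[OF _ assms(4)])
  show "Mt ent rs cs \<in> carrier_mat (length rs) (length rs)" using Mt_carrier[of ent rs cs] assms(1) by simp
  show "row (Mt ent rs cs) i = row (Mt ent rs cs) j"
  proof (rule eq_vecI)
    fix k assume "k < dim_vec (row (Mt ent rs cs) j)"
    hence k: "k < length cs" by (simp add: Mt_def)
    show "row (Mt ent rs cs) i $ k = row (Mt ent rs cs) j $ k"
      using assms k by (simp add: Mt_def)
  qed (simp add: Mt_def)
qed (use assms in auto)

lemma det_Mt_identical_cols:
  assumes "length rs = length cs" "i < length cs" "j < length cs" "i \<noteq> j" "cs ! i = cs ! j"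
  shows "det (Mt ent rs cs) = 0"
proof (rule det_identical_columns[OF _ assms(4)])
  show "Mt ent rs cs \<in> carrier_mat (length cs) (length cs)" using Mt_carrier[of ent rs cs] assms(1) by simp
  show "col (Mt ent rs cs) i = col (Mt ent rs cs) j"
  proof (rule eq_vecI)
    fix k assume "k < dim_vec (col (Mt ent rs cs) j)"
    hence k: "k < length rs" by (simp add: Mt_def)
    show "col (Mt ent rs cs) i $ k = col (Mt ent rs cs) j $ k"
      using assms k by (simp add: Mt_def)
  qed (simp add: Mt_def)
qed (use assms in auto)


lemma det_Mt_of_int:
  "det (Mt (\<lambda>r c. real_of_int (ent r c)) rs cs) = real_of_int (det (Mt ent rs cs))"
proof -
  have "Mt (\<lambda>r c. real_of_int (ent r c)) rs cs = map_mat real_of_int (Mt ent rs cs)"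
    by (rule eq_matI) (simp_all add: Mt_def)
  thus ?thesis by (simp only: of_int_hom.hom_det)
qed


lemma det_Mt_Nil: "det (Mt ent [] []) = 1"
  by (simp add: Mt_def det_def)

locale core =
  fixes y :: "nat \<Rightarrow> real" and Q :: "nat \<Rightarrow> (nat \<Rightarrow> nat) \<Rightarrow> int"
    and E :: "(nat \<Rightarrow> nat) set" and v :: "(nat \<Rightarrow> nat) \<Rightarrow> real"
    and l :: "nat \<Rightarrow> real" and m :: nat
  assumes finE: "finite E"
    and hy: "\<And>k. k \<le> m \<Longrightarrow> y k = (\<Sum>e\<in>E. v e * of_int (Q k e))"
    and hl: "\<And>k e. k \<le> m \<Longrightarrow> \<bar>real_of_int (Q k e)\<bar> \<le> l k"
    and ynz: "\<And>k. k \<le> m \<Longrightarrow> y k \<noteq> 0"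
begin

definition ent :: "nat \<Rightarrow> (nat \<Rightarrow> nat) option \<Rightarrow> real" where
  "ent k c = (case c of None \<Rightarrow> y k | Some e \<Rightarrow> of_int (Q k e))"

definition LS :: "nat \<Rightarrow> (nat \<Rightarrow> nat) list set" where
  "LS r = {cs. distinct cs \<and> set cs \<subseteq> E \<and> length cs = r}"

definition Mi where "Mi rs T = det (Mt ent rs (map Some T))"
definition Ni where "Ni rs S = det (Mt ent rs (None # map Some S))"
definition ZZ where "ZZ rs b \<longleftrightarrow> (\<forall>T\<in>LS (Suc (length rs)). Mi (b # rs) T = 0)"
definition Gd where "Gd rs B \<longleftrightarrow> (\<forall>S\<in>LS (length rs - 1). \<bar>Ni rs S\<bar> \<le> B)"

lemma l_nonneg: "k \<le> m \<Longrightarrow> 0 \<le> l k"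
  using hl[of k undefined] by linarith

lemma Mi_int: "Mi rs T = of_int (det (Mt Q rs T))"
proof -
  have "Mt ent rs (map Some T) = Mt (\<lambda>r c. real_of_int (Q r c)) rs T"
    by (rule eq_matI) (simp_all add: Mt_def ent_def)
  thus ?thesis unfolding Mi_def by (simp add: det_Mt_of_int)
qed

lemma Mi_ge1: assumes "Mi rs T \<noteq> 0" shows "1 \<le> \<bar>Mi rs T\<bar>"
proof -
  have d: "det (Mt Q rs T) \<noteq> 0" using assms unfolding Mi_int by auto
  have "1 \<le> \<bar>det (Mt Q rs T)\<bar>" using d by linarith
  hence "(1::real) \<le> of_int \<bar>det (Mt Q rs T)\<bar>" by linarith
  thus ?thesis unfolding Mi_int by simp
qed

lemma LS_dl: "T \<in> LS r \<Longrightarrow> j < r \<Longrightarrow> dl j T \<in> LS (r - 1)"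
  unfolding LS_def using set_dl[of j T] distinct_dl[of T j] by auto

lemma LS_len: "T \<in> LS r \<Longrightarrow> r \<le> card E"
  unfolding LS_def using finE by (metis (mono_tags, lifting) card_mono distinct_card mem_Collect_eq)

lemma ZZ_mem:
  assumes "b \<in> set rs" shows "ZZ rs b"
  unfolding ZZ_def Mi_def
proof
  fix T assume T: "T \<in> LS (Suc (length rs))"
  obtain i where i: "i < length rs" "rs ! i = b" using assms by (meson in_set_conv_nth)
  show "det (Mt ent (b # rs) (map Some T)) = 0"
    by (rule det_Mt_identical_rows[of _ _ 0 "Suc i"]) (use T i in \<open>auto simp: LS_def\<close>)
qed

lemma Ni_zero:
  assumes "ZZ rs b" "set (b # rs) \<subseteq> {..m}" "T \<in> LS (length rs)"
  shows "Ni (b # rs) T = 0"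
proof -
  have len: "length (b # rs) = Suc (length (map Some T))" using assms(3) by (simp add: LS_def)
  have "Ni (b # rs) T = (\<Sum>e\<in>E. v e * det (Mt ent (b # rs) (Some e # map Some T)))"
    unfolding Ni_def
  proof (rule det_Mt_col_linear[OF len finE])
    fix r assume "r \<in> set (b # rs)"
    hence "r \<le> m" using assms(2) by auto
    thus "ent r None = (\<Sum>e\<in>E. v e * ent r (Some e))" by (simp add: ent_def hy)
  qed
  also have "\<dots> = 0"
  proof (rule sum.neutral, rule ballI)
    fix e assume e: "e \<in> E"
    show "v e * det (Mt ent (b # rs) (Some e # map Some T)) = 0"
    proof (cases "e \<in> set T")
      case True
      then obtain i where i: "i < length T" "T ! i = e" by (meson in_set_conv_nth)
      have "det (Mt ent (b # rs) (Some e # map Some T)) = 0"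
        by (rule det_Mt_identical_cols[of _ _ 0 "Suc i"]) (use i len in auto)
      thus ?thesis by simp
    next
      case False
      hence "e # T \<in> LS (Suc (length rs))" using assms(3) e by (auto simp: LS_def)
      hence "Mi (b # rs) (e # T) = 0" using assms(1) by (simp add: ZZ_def)
      thus ?thesis by (simp add: Mi_def)
    qed
  qed
  finally show ?thesis .
qed

lemma Ni_expand:
  assumes "length T = length rs"
  shows "Ni (a # rs) T = y a * Mi rs T +
     (\<Sum>j<length rs. of_int (Q a (T ! j)) * ((-1) ^ Suc j * Ni rs (dl j T)))"
proof -
  have len: "length (None # map Some T) = Suc (length rs)" using assms by simp
  have "Ni (a # rs) T = (\<Sum>j<Suc (length rs). ent a ((None # map Some T) ! j) *
          ((-1) ^ j * det (Mt ent rs (dl j (None # map Some T)))))"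
    unfolding Ni_def laplace_Mt_row0[OF len] len ..
  also have "\<dots> = y a * Mi rs T +
     (\<Sum>j<length rs. of_int (Q a (T ! j)) * ((-1) ^ Suc j * Ni rs (dl j T)))"
    unfolding sum.lessThan_Suc_shift
    using assms by (simp add: ent_def Mi_def Ni_def dl_map)
  finally show ?thesis .
qed

lemma sum_bound:
  assumes "T \<in> LS (length rs)" "Gd rs B" "a \<le> m"
  shows "\<bar>\<Sum>j<length rs. of_int (Q a (T ! j)) * ((-1) ^ Suc j * Ni rs (dl j T))\<bar>
      \<le> real (length rs) * l a * B"
proof -
  have "\<bar>\<Sum>j<length rs. of_int (Q a (T ! j)) * ((-1) ^ Suc j * Ni rs (dl j T))\<bar>
     \<le> (\<Sum>j<length rs. \<bar>of_int (Q a (T ! j)) * ((-1) ^ Suc j * Ni rs (dl j T))\<bar>)"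
    by (rule sum_abs)
  also have "\<dots> \<le> (\<Sum>j<length rs. l a * B)"
  proof (rule sum_mono)
    fix j assume j: "j \<in> {..<length rs}"
    have "dl j T \<in> LS (length rs - 1)" using LS_dl[OF assms(1)] j by auto
    hence N: "\<bar>Ni rs (dl j T)\<bar> \<le> B" using assms(2) by (simp add: Gd_def)
    have "\<bar>of_int (Q a (T ! j)) * ((-1) ^ Suc j * Ni rs (dl j T))\<bar>
        = \<bar>real_of_int (Q a (T ! j))\<bar> * \<bar>Ni rs (dl j T)\<bar>"
      by (simp add: abs_mult)
    also have "\<dots> \<le> l a * B"
      by (rule mult_mono[OF hl[OF assms(3)] N]) (use l_nonneg[OF assms(3)] in auto)
    finally show "\<bar>of_int (Q a (T ! j)) * ((-1) ^ Suc j * Ni rs (dl j T))\<bar> \<le> l a * B" .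
  qed
  also have "\<dots> = real (length rs) * l a * B" by simp
  finally show ?thesis .
qed

lemma rel:
  assumes "ZZ rs b" "set (b # rs) \<subseteq> {..m}" "Gd rs B" "T \<in> LS (length rs)"
  shows "\<bar>y b\<bar> * \<bar>Mi rs T\<bar> \<le> real (length rs) * l b * B"
proof -
  have lenT: "length T = length rs" using assms(4) by (simp add: LS_def)
  have "0 = Ni (b # rs) T" using Ni_zero[OF assms(1,2,4)] by simp
  hence "y b * Mi rs T = - (\<Sum>j<length rs. of_int (Q b (T ! j)) * ((-1) ^ Suc j * Ni rs (dl j T)))"
    unfolding Ni_expand[OF lenT] by linarith
  hence "\<bar>y b\<bar> * \<bar>Mi rs T\<bar> = \<bar>\<Sum>j<length rs. of_int (Q b (T ! j)) * ((-1) ^ Suc j * Ni rs (dl j T))\<bar>"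
    by (simp add: abs_mult[symmetric])
  also have "\<dots> \<le> real (length rs) * l b * B"
    by (rule sum_bound[OF assms(4,3)]) (use assms(2) in auto)
  finally show ?thesis .
qed

lemma step:
  assumes "Gd rs B" "\<And>T. T \<in> LS (length rs) \<Longrightarrow> \<bar>Mi rs T\<bar> \<le> M" "a \<le> m"
  shows "Gd (a # rs) (\<bar>y a\<bar> * M + real (length rs) * l a * B)"
  unfolding Gd_def
proof
  fix S assume S0: "S \<in> LS (length (a # rs) - 1)"
  hence S: "S \<in> LS (length rs)" by simp
  have lenS: "length S = length rs" using S by (simp add: LS_def)
  have "\<bar>Ni (a # rs) S\<bar> \<le> \<bar>y a * Mi rs S\<bar> +
     \<bar>\<Sum>j<length rs. of_int (Q a (S ! j)) * ((-1) ^ Suc j * Ni rs (dl j S))\<bar>"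
    unfolding Ni_expand[OF lenS] by (rule abs_triangle_ineq)
  also have "\<dots> \<le> \<bar>y a\<bar> * M + real (length rs) * l a * B"
    by (rule add_mono) (use assms(2)[OF S] sum_bound[OF S assms(1,3)] in \<open>auto simp: abs_mult intro: mult_left_mono\<close>)
  finally show "\<bar>Ni (a # rs) S\<bar> \<le> \<bar>y a\<bar> * M + real (length rs) * l a * B" .
qed

lemma Gd_mono: "Gd rs B \<Longrightarrow> B \<le> B' \<Longrightarrow> Gd rs B'"
  unfolding Gd_def by force

end


context core begin

fun sel :: "nat \<Rightarrow> nat list" where
  "sel 0 = [m]"
| "sel (Suc i) = (if \<exists>T\<in>LS (Suc (length (sel i))). Mi ((m - Suc i) # sel i) T \<noteq> 0
      then (m - Suc i) # sel i else sel i)"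

definition F :: "nat \<Rightarrow> real" where
  "F k = real (card E) * (\<bar>y k\<bar> * l (Suc k) / \<bar>y (Suc k)\<bar> + l k)"

lemma F_nonneg: "k < m \<Longrightarrow> 0 \<le> F k"
  unfolding F_def using l_nonneg[of k] l_nonneg[of "Suc k"] by simp

lemma inv:
  assumes "i \<le> m"
  shows "sel i \<noteq> [] \<and> set (sel i) \<subseteq> {m - i..m} \<and> (\<exists>T\<in>LS (length (sel i)). Mi (sel i) T \<noteq> 0)
     \<and> ZZ (sel i) (m - i) \<and> (\<exists>K \<subseteq> {m - i..<m}. card K + 1 = length (sel i) \<and> Gd (sel i) (\<bar>y m\<bar> * prod F K))"
  using assms
proof (induction i)
  case 0
  obtain e where e: "e \<in> E" "Q m e \<noteq> 0"
  proof -
    have "y m \<noteq> 0" using ynz by simp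
    hence "\<exists>e\<in>E. Q m e \<noteq> 0"
    proof (rule contrapos_np)
      assume "\<not> (\<exists>e\<in>E. Q m e \<noteq> 0)"
      hence "\<forall>e\<in>E. v e * of_int (Q m e) = (0::real)" by auto
      hence "(\<Sum>e\<in>E. v e * of_int (Q m e)) = (0::real)" by (rule sum.neutral)
      thus "y m = 0" using hy[of m] by simp
    qed
    thus ?thesis using that by blast
  qed
  have T: "[e] \<in> LS 1" using e by (simp add: LS_def)
  have "Mi [m] [e] = of_int (Q m e)"
    unfolding Mi_def using laplace_Mt_row0[of "[Some e]" "[]" ent m] by (simp add: det_Mt_Nil ent_def)
  hence nz: "Mi [m] [e] \<noteq> 0" using e by simp
  have Gd: "Gd [m] \<bar>y m\<bar>"
    unfolding Gd_def
  proof
    fix S assume "S \<in> LS (length [m] - 1)"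
    hence "S = []" by (simp add: LS_def)
    thus "\<bar>Ni [m] S\<bar> \<le> \<bar>y m\<bar>"
      using Ni_expand[of "[]" "[]" m] by (simp add: Mi_def det_Mt_Nil)
  qed
  have z: "ZZ [m] (m - 0)" using ZZ_mem[of m "[m]"] by simp
  have k: "\<exists>K \<subseteq> {m - 0..<m}. card K + 1 = length (sel 0) \<and> Gd (sel 0) (\<bar>y m\<bar> * prod F K)"
    by (rule exI[of _ "{}"]) (use Gd in simp)
  have "\<exists>T\<in>LS (length (sel 0)). Mi (sel 0) T \<noteq> 0" using T nz by auto
  thus ?case using z k by simp
next
  case (Suc i)
  hence im: "i < m" by simp
  from Suc.IH im obtain K where
    ne: "sel i \<noteq> []" and st: "set (sel i) \<subseteq> {m - i..m}" and nz: "\<exists>T\<in>LS (length (sel i)). Mi (sel i) T \<noteq> 0"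
    and zz: "ZZ (sel i) (m - i)" and K: "K \<subseteq> {m - i..<m}" "card K + 1 = length (sel i)"
    and gd: "Gd (sel i) (\<bar>y m\<bar> * prod F K)" by auto
  define k where "k = m - Suc i"
  have k1: "Suc k = m - i" "k < m" using im unfolding k_def by auto
  define rs where "rs = sel i"
  define B where "B = \<bar>y m\<bar> * prod F K"
  have B0: "0 \<le> B" unfolding B_def
    by (intro mult_nonneg_nonneg abs_ge_zero prod_nonneg) (use K(1) F_nonneg in auto)
  have rslen: "length rs \<le> card E" using nz LS_len unfolding rs_def by blast
  show ?case
  proof (cases "\<exists>T\<in>LS (Suc (length rs)). Mi (k # rs) T \<noteq> 0")
    case True
    hence sel: "sel (Suc i) = k # rs" unfolding rs_def k_def by simp
    have M: "\<bar>Mi rs T\<bar> \<le> real (length rs) * l (Suc k) * B / \<bar>y (Suc k)\<bar>" if T: "T \<in> LS (length rs)" for T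
    proof -
      have "\<bar>y (Suc k)\<bar> * \<bar>Mi rs T\<bar> \<le> real (length rs) * l (Suc k) * B"
        by (rule rel) (use zz st gd T k1 in \<open>auto simp: rs_def B_def\<close>)
      moreover have "0 < \<bar>y (Suc k)\<bar>" using ynz[of "Suc k"] k1 by auto
      ultimately show ?thesis by (simp add: field_simps)
    qed
    have g1: "Gd (k # rs) (\<bar>y k\<bar> * (real (length rs) * l (Suc k) * B / \<bar>y (Suc k)\<bar>) + real (length rs) * l k * B)"
      by (rule step) (use gd M k1 in \<open>auto simp: rs_def B_def\<close>)
    have "\<bar>y k\<bar> * (real (length rs) * l (Suc k) * B / \<bar>y (Suc k)\<bar>) + real (length rs) * l k * B
        = (real (length rs) * (\<bar>y k\<bar> * l (Suc k) / \<bar>y (Suc k)\<bar> + l k)) * B"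
      by (simp add: field_simps)
    also have "\<dots> \<le> F k * B"
      unfolding F_def
      by (rule mult_right_mono[OF mult_right_mono]) (use rslen B0 l_nonneg[of k] l_nonneg[of "Suc k"] k1 in auto)
    also have "\<dots> = \<bar>y m\<bar> * prod F (insert k K)"
    proof -
      have "k \<notin> K" using K(1) k1 by auto
      moreover have "finite K" using K(1) finite_subset by blast
      ultimately show ?thesis unfolding B_def by (simp add: prod.insert)
    qed
    finally have g2: "Gd (k # rs) (\<bar>y m\<bar> * prod F (insert k K))" using g1 Gd_mono by blast
    have c: "card (insert k K) + 1 = length (k # rs)"
    proof -
      have "k \<notin> K" using K(1) k1 by auto
      moreover have "finite K" using K(1) finite_subset by blast
      ultimately show ?thesis using K(2) by (simp add: rs_def)
    qed
    have s: "insert k K \<subseteq> {m - Suc i..<m}" using K(1) k1 unfolding k_def by auto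
    have z: "ZZ (k # rs) (m - Suc i)" unfolding k_def[symmetric] by (rule ZZ_mem) simp
    have st': "set (k # rs) \<subseteq> {m - Suc i..m}" using st k1 unfolding rs_def k_def by auto
    show ?thesis unfolding sel
    proof (intro conjI)
      show "k # rs \<noteq> []" by simp
      show "set (k # rs) \<subseteq> {m - Suc i..m}" using st' .
      show "\<exists>T\<in>LS (length (k # rs)). Mi (k # rs) T \<noteq> 0" using True by simp
      show "ZZ (k # rs) (m - Suc i)" using z .
      show "\<exists>K'\<subseteq>{m - Suc i..<m}. card K' + 1 = length (k # rs) \<and> Gd (k # rs) (\<bar>y m\<bar> * prod F K')"
        using c s g2 by blast
    qed
  next
    case False
    hence sel: "sel (Suc i) = rs" unfolding rs_def k_def by simp
    have "ZZ rs k" using False unfolding ZZ_def by auto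
    moreover have "K \<subseteq> {m - Suc i..<m}" using K(1) by (auto simp: subset_iff)
    moreover have "set rs \<subseteq> {m - Suc i..m}" using st unfolding rs_def by (auto simp: subset_iff)
    ultimately show ?thesis unfolding sel
      by (intro conjI) (use ne nz gd K(2) in \<open>auto simp: k_def rs_def\<close>)
  qed
qed

theorem core_main:
  "\<exists>K \<subseteq> {..<m}. card K < card E \<and> \<bar>y 0\<bar> \<le> real (card E) * l 0 * (\<bar>y m\<bar> * prod F K)"
proof -
  from inv[of m] obtain K T where
    st: "set (sel m) \<subseteq> {0..m}" and T: "T \<in> LS (length (sel m))" "Mi (sel m) T \<noteq> 0"
    and zz: "ZZ (sel m) 0" and K: "K \<subseteq> {0..<m}" "card K + 1 = length (sel m)"
    and gd: "Gd (sel m) (\<bar>y m\<bar> * prod F K)" by auto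
  have len: "length (sel m) \<le> card E" using LS_len[OF T(1)] .
  have "\<bar>y 0\<bar> * \<bar>Mi (sel m) T\<bar> \<le> real (length (sel m)) * l 0 * (\<bar>y m\<bar> * prod F K)"
    by (rule rel[OF zz _ gd T(1)]) (use st in auto)
  moreover have "\<bar>y 0\<bar> \<le> \<bar>y 0\<bar> * \<bar>Mi (sel m) T\<bar>"
    using Mi_ge1[OF T(2)] by (simp add: mult_le_cancel_left1)
  moreover have "real (length (sel m)) * l 0 * (\<bar>y m\<bar> * prod F K) \<le> real (card E) * l 0 * (\<bar>y m\<bar> * prod F K)"
  proof (rule mult_right_mono[OF mult_right_mono])
    show "0 \<le> \<bar>y m\<bar> * prod F K"
      by (intro mult_nonneg_nonneg abs_ge_zero prod_nonneg) (use K(1) F_nonneg in auto)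
  qed (use len l_nonneg[of 0] in auto)
  ultimately have "\<bar>y 0\<bar> \<le> real (card E) * l 0 * (\<bar>y m\<bar> * prod F K)" by linarith
  moreover have "card K < card E" using K(2) len by simp
  moreover have "K \<subseteq> {..<m}" using K(1) by auto
  ultimately show ?thesis by blast
qed

end

lemma sum_choose_shift: "(\<Sum>i<Suc N. (i + t) choose t) = (N + Suc t) choose Suc t"
proof (induction N)
  case 0
  show ?case by simp
next
  case (Suc N)
  have "(\<Sum>i<Suc (Suc N). (i + t) choose t) = (\<Sum>i<Suc N. (i + t) choose t) + ((Suc N + t) choose t)"
    by (rule sum.lessThan_Suc)
  also have "\<dots> = ((N + Suc t) choose Suc t) + ((N + Suc t) choose t)"
    unfolding Suc.IH add_Suc add_Suc_right ..
  also have "\<dots> = Suc (N + Suc t) choose Suc t"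
    by (subst binomial_Suc_Suc) (rule add.commute)
  finally show ?case by simp
qed

lemma monos_card:
  "finite {e::nat\<Rightarrow>nat. (\<forall>i\<ge>t. e i = 0) \<and> (\<Sum>i<t. e i) \<le> N} \<and>
   card {e::nat\<Rightarrow>nat. (\<forall>i\<ge>t. e i = 0) \<and> (\<Sum>i<t. e i) \<le> N} \<le> (N + t) choose t"
proof (induction t arbitrary: N)
  case 0
  have "{e::nat\<Rightarrow>nat. (\<forall>i\<ge>0. e i = 0) \<and> (\<Sum>i<0. e i) \<le> N} = {(\<lambda>_. 0)}"
  proof (intro equalityI subsetI)
    fix e assume "e \<in> {e::nat\<Rightarrow>nat. (\<forall>i\<ge>0. e i = 0) \<and> (\<Sum>i<0. e i) \<le> N}"
    hence "e = (\<lambda>_. 0)" by (simp add: fun_eq_iff)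
    thus "e \<in> {(\<lambda>_. 0)}" by simp
  qed simp
  thus ?case by simp
next
  case (Suc t)
  define S where "S = (\<lambda>N. {e::nat\<Rightarrow>nat. (\<forall>i\<ge>t. e i = 0) \<and> (\<Sum>i<t. e i) \<le> N})"
  define S' where "S' = {e::nat\<Rightarrow>nat. (\<forall>i\<ge>Suc t. e i = 0) \<and> (\<Sum>i<Suc t. e i) \<le> N}"
  define A where "A = (SIGMA j:{..N}. S (N - j))"
  have finA: "finite A" unfolding A_def using Suc.IH unfolding S_def by auto
  have sub: "S' \<subseteq> (\<lambda>(j, e). e(t := j)) ` A"
  proof
    fix e assume e: "e \<in> S'"
    define e' where "e' = e(t := 0)"
    have s: "(\<Sum>i<t. e' i) = (\<Sum>i<t. e i)" unfolding e'_def by (rule sum.cong) auto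
    have tot: "(\<Sum>i<t. e i) + e t \<le> N" using e unfolding S'_def by simp
    have z: "\<forall>i\<ge>t. e' i = 0"
    proof (intro allI impI)
      fix i assume "t \<le> i"
      show "e' i = 0"
      proof (cases "i = t")
        case True thus ?thesis by (simp add: e'_def)
      next
        case False
        hence "Suc t \<le> i" using \<open>t \<le> i\<close> by simp
        thus ?thesis using e False unfolding S'_def e'_def by simp
      qed
    qed
    have "(\<Sum>i<t. e' i) \<le> N - e t" using s tot by simp
    hence "e' \<in> S (N - e t)" unfolding S_def using z by simp
    moreover have "e t \<le> N" using tot by simp
    ultimately have "(e t, e') \<in> A" unfolding A_def by auto
    moreover have "e = e'(t := e t)" unfolding e'_def by simp
    ultimately show "e \<in> (\<lambda>(j, e). e(t := j)) ` A" by (intro rev_image_eqI[of "(e t, e')"]) simp_all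
  qed
  have fin: "finite S'" by (rule finite_subset[OF sub finite_imageI[OF finA]])
  have "card S' \<le> card A"
    using card_mono[OF _ sub] card_image_le[OF finA] finA by (meson finite_imageI le_trans)
  also have "card A = (\<Sum>j\<le>N. card (S (N - j)))"
    unfolding A_def by (rule card_SigmaI) (use Suc.IH in \<open>auto simp: S_def\<close>)
  also have "\<dots> \<le> (\<Sum>j\<le>N. (N - j + t) choose t)"
  proof (rule sum_mono)
    fix j assume "j \<in> {..N}"
    show "card (S (N - j)) \<le> (N - j + t) choose t" using Suc.IH[of "N - j"] unfolding S_def by simp
  qed
  also have "\<dots> = (\<Sum>j<Suc N. (j + t) choose t)"
    using sum.nat_diff_reindex[of "\<lambda>i. (i + t) choose t" "Suc N"]
    by (simp add: lessThan_Suc_atMost)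
  also have "\<dots> = (N + Suc t) choose Suc t" by (rule sum_choose_shift)
  finally show ?case using fin unfolding S'_def by simp
qed

lemma monos_card_real:
  "real (card {e::nat\<Rightarrow>nat. (\<forall>i\<ge>t. e i = 0) \<and> (\<Sum>i<t. e i) \<le> N}) \<le> real (N + t) ^ t / fact t"
proof -
  define X where "X = {e::nat\<Rightarrow>nat. (\<forall>i\<ge>t. e i = 0) \<and> (\<Sum>i<t. e i) \<le> N}"
  have "card X * fact t \<le> ((N + t) choose t) * fact t"
    using monos_card[of t N] unfolding X_def by simp
  also have "\<dots> \<le> (N + t) ^ t" by (rule binomial_fact_pow)
  finally have h: "card X * fact t \<le> (N + t) ^ t" .
  have "real (card X * fact t) \<le> real ((N + t) ^ t)" using h by (simp only: of_nat_le_iff)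
  hence "real (card X) * fact t \<le> real (N + t) ^ t" by (simp only: of_nat_mult of_nat_fact of_nat_power)
  hence "real (card X) \<le> real (N + t) ^ t / fact t" by (simp add: pos_le_divide_eq)
  thus ?thesis unfolding X_def .
qed

lemma powr_diff_bound:
  fixes x p :: real
  assumes "0 \<le> x" "1 \<le> p"
  shows "(x + 1) powr p - x powr p \<le> p * (x + 1) powr (p - 1)"
proof (cases "x = 0")
  case True
  thus ?thesis using assms by simp
next
  case False
  hence x: "0 < x" using assms by simp
  have der: "\<And>z. x \<le> z \<Longrightarrow> z \<le> x + 1 \<Longrightarrow> ((\<lambda>z. z powr p) has_real_derivative p * z powr (p - 1)) (at z)"
  proof -
    fix z assume "x \<le> z" "z \<le> x + 1"
    hence "0 < z" using x by linarith
    thus "((\<lambda>z. z powr p) has_real_derivative p * z powr (p - 1)) (at z)"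
      by (rule has_real_derivative_powr)
  qed
  obtain z where z: "x < z" "z < x + 1" "(x + 1) powr p - x powr p = (x + 1 - x) * (p * z powr (p - 1))"
    using MVT2[of x "x + 1", OF _ der] by auto
  have "z powr (p - 1) \<le> (x + 1) powr (p - 1)"
    by (rule powr_mono2) (use z x assms in auto)
  hence "p * z powr (p - 1) \<le> p * (x + 1) powr (p - 1)"
    by (rule mult_left_mono) (use assms in linarith)
  moreover have "(x + 1) powr p - x powr p = p * z powr (p - 1)" using z(3) by simp
  ultimately show ?thesis by linarith
qed

definition rmax :: "(nat \<Rightarrow> real) \<Rightarrow> nat \<Rightarrow> real" where
  "rmax x m = Max ((\<lambda>j. \<bar>x j\<bar>) ` {..m})"

lemma rmax_ge: "j \<le> m \<Longrightarrow> \<bar>x j\<bar> \<le> rmax x m"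
  unfolding rmax_def by (rule Max_ge) auto

lemma rmax_nonneg: "0 \<le> rmax x m"
  using rmax_ge[of 0 m x] by simp

lemma rmax_le: "(\<And>j. j \<le> m \<Longrightarrow> \<bar>x j\<bar> \<le> B) \<Longrightarrow> rmax x m \<le> B"
  unfolding rmax_def by (subst Max_le_iff) auto

lemma rmax_o:
  fixes x w :: "nat \<Rightarrow> real"
  assumes x: "(\<lambda>n. x n / w n) \<longlonglongrightarrow> 0" and w: "mono w" "filterlim w at_top sequentially"
  shows "(\<lambda>m. rmax x m / w m) \<longlonglongrightarrow> 0"
proof (rule LIMSEQ_I)
  fix r :: real assume r: "0 < r"
  obtain N1 where N1: "\<And>n. n \<ge> N1 \<Longrightarrow> \<bar>x n / w n\<bar> < r / 2"
    using LIMSEQ_D[OF x, of "r/2"] r by auto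
  obtain N2 where N2: "\<And>n. n \<ge> N2 \<Longrightarrow> 1 \<le> w n"
    using w(2) unfolding filterlim_at_top eventually_sequentially by blast
  define N where "N = max N1 N2"
  define C where "C = rmax x N"
  obtain N3 where N3: "\<And>n. n \<ge> N3 \<Longrightarrow> 2 * C / r + 1 \<le> w n"
    using w(2) unfolding filterlim_at_top eventually_sequentially by blast
  show "\<exists>no. \<forall>n\<ge>no. norm (rmax x n / w n - 0) < r"
  proof (intro exI allI impI)
    fix m assume m: "max N N3 \<le> m"
    have wm1: "1 \<le> w m" using N2[of m] m unfolding N_def by simp
    have wC: "2 * C / r + 1 \<le> w m" using N3 m by simp
    have Cle: "C < r / 2 * w m"
    proof -
      have "r / 2 * w m \<ge> r / 2 * (2 * C / r + 1)" using wC r by simp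
      also have "r / 2 * (2 * C / r + 1) = C + r / 2" using r by (simp add: algebra_simps)
      finally show ?thesis using r by simp
    qed
    have "rmax x m \<le> r / 2 * w m"
    proof (rule rmax_le)
      fix j assume j: "j \<le> m"
      show "\<bar>x j\<bar> \<le> r / 2 * w m"
      proof (cases "j \<le> N")
        case True
        hence "\<bar>x j\<bar> \<le> C" unfolding C_def by (rule rmax_ge)
        thus ?thesis using Cle by simp
      next
        case False
        hence wj: "1 \<le> w j" "w j \<le> w m" using N2[of j] j w(1) unfolding N_def mono_def by auto
        have "\<bar>x j / w j\<bar> < r / 2" using N1[of j] False unfolding N_def by simp
        moreover have aw: "\<bar>w j\<bar> = w j" using wj by simp
        moreover have "\<bar>x j / w j\<bar> = \<bar>x j\<bar> / w j" by (simp only: abs_divide aw)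
        ultimately have "\<bar>x j\<bar> / w j < r / 2" by linarith
        hence "\<bar>x j\<bar> < r / 2 * w j" using wj by (simp add: divide_less_eq)
        also have "\<dots> \<le> r / 2 * w m" using wj r by simp
        finally show ?thesis by simp
      qed
    qed
    hence "rmax x m / w m \<le> r / 2" using wm1 by (simp add: divide_le_eq)
    moreover have "0 \<le> rmax x m / w m" using rmax_nonneg wm1 by simp
    ultimately have "\<bar>rmax x m / w m\<bar> < r" using r by linarith
    thus "norm (rmax x m / w m - 0) < r" by simp
  qed
qed

lemma powr_at_top: "0 < s \<Longrightarrow> filterlim (\<lambda>m::nat. real m powr s) at_top sequentially"
proof -
  assume s: "0 < s"
  have "((\<lambda>m::nat. real m powr (- s)) \<longlonglongrightarrow> 0)"
    by (rule tendsto_neg_powr) (use s filterlim_real_sequentially in auto)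
  hence "filterlim (\<lambda>m::nat. inverse (real m powr (- s))) at_top sequentially"
  proof (rule filterlim_inverse_at_top)
    show "\<forall>\<^sub>F x in sequentially. 0 < real x powr - s"
      unfolding eventually_sequentially by (intro exI[of _ 1]) auto
  qed
  thus ?thesis by (simp add: powr_minus)
qed

lemma div_top: "(f \<longlonglongrightarrow> (c::real)) \<Longrightarrow> filterlim g at_top sequentially \<Longrightarrow> (\<lambda>m. f m / g m) \<longlonglongrightarrow> 0"
  by (rule tendsto_divide_0) (auto intro: filterlim_at_top_imp_at_infinity)

lemma powr_mono_nat: "0 \<le> s \<Longrightarrow> mono (\<lambda>m::nat. real m powr s)"
  unfolding mono_def by (intro allI impI powr_mono2) auto

theorem mainTheorem5:
  fixes t :: nat and \<theta> :: "nat \<Rightarrow> real"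
    and \<beta> \<delta> \<kappa> lam \<alpha> \<gamma> :: real
    and P :: "nat \<Rightarrow> mpoly_int"
  assumes t_pos: "t \<ge> 1"
    and pos: "\<beta> > 0" "\<delta> > 0" "\<kappa> > 0" "lam > 0"
    and kappa_le: "\<kappa> \<le> 1 / real t"
    and poly: "\<And>n. is_mpoly t (P n)"
    and deg: "\<exists>f. f \<in> o(\<lambda>n. real n powr \<kappa>) \<and>
                 (\<forall>n. total_deg_le t (P n) (\<delta> * real n powr \<kappa> + f n))"
    and len: "\<exists>g. g \<in> o(\<lambda>n. real n) \<and>
                 (\<forall>n. mpoly_length (P n) \<le> exp (\<beta> * real n + g n))"
    and bounds: "\<exists>h1 h2. h1 \<longlonglongrightarrow> 0 \<and> h2 \<longlonglongrightarrow> 0 \<and>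
        (\<forall>n. exp (- lam * real n powr (1 + real t * \<kappa>) - (\<alpha> + h1 n) * real n)
                \<le> \<bar>mpoly_eval t (P n) \<theta>\<bar> \<and>
             \<bar>mpoly_eval t (P n) \<theta>\<bar>
                \<le> exp (- lam * real n powr (1 + real t * \<kappa>) - (\<gamma> + h2 n) * real n))"
  shows "(\<kappa> = 1 / real t \<longrightarrow>
            lam * (1 - 2 * \<delta> ^ t / fact t) \<le> \<delta> ^ t * (\<alpha> + \<beta> - \<gamma>) / fact t)
       \<and> (\<kappa> < 1 / real t \<longrightarrow> lam \<le> \<delta> ^ t * (\<alpha> + \<beta> - \<gamma>) / fact t)"
proof -
  obtain f where f_o: "f \<in> o(\<lambda>n. real n powr \<kappa>)"
    and f_deg: "\<And>n. total_deg_le t (P n) (\<delta> * real n powr \<kappa> + f n)"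
    using deg by blast
  obtain g where g_o: "g \<in> o(\<lambda>n. real n)"
    and g_len: "\<And>n. mpoly_length (P n) \<le> exp (\<beta> * real n + g n)"
    using len by blast
  obtain h1 h2 where h1: "h1 \<longlonglongrightarrow> 0" and h2: "h2 \<longlonglongrightarrow> 0" and hb: "\<And>n.
       exp (- lam * real n powr (1 + real t * \<kappa>) - (\<alpha> + h1 n) * real n)
                \<le> \<bar>mpoly_eval t (P n) \<theta>\<bar> \<and>
             \<bar>mpoly_eval t (P n) \<theta>\<bar>
                \<le> exp (- lam * real n powr (1 + real t * \<kappa>) - (\<gamma> + h2 n) * real n)"
    using bounds by blast
  define s where "s = real t * \<kappa>"
  define p where "p = 1 + s"
  define y where "y n = mpoly_eval t (P n) \<theta>" for n
  define Lo where "Lo n = exp (- lam * real n powr p - (\<alpha> + h1 n) * real n)" for n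
  define Up where "Up n = exp (- lam * real n powr p - (\<gamma> + h2 n) * real n)" for n
  have yLo: "Lo n \<le> \<bar>y n\<bar>" for n using hb[of n] unfolding Lo_def y_def p_def s_def by blast
  have yUp: "\<bar>y n\<bar> \<le> Up n" for n using hb[of n] unfolding Up_def y_def p_def s_def by blast
  have Lo_pos: "0 < Lo n" for n unfolding Lo_def by simp
  have ynz: "y n \<noteq> 0" for n using yLo[of n] Lo_pos[of n] by auto
  have tpos: "0 < real t" using t_pos by simp
  have s_pos: "0 < s" using tpos pos(3) unfolding s_def by simp
  have s_le: "s \<le> 1"
  proof -
    have "real t * \<kappa> \<le> real t * (1 / real t)" by (rule mult_left_mono) (use kappa_le in auto)
    thus ?thesis using tpos unfolding s_def by simp
  qed
  have p_gt: "1 < p" using s_pos unfolding p_def by simp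
  have ag: "\<gamma> \<le> \<alpha>"
  proof -
    have "(\<lambda>n. \<alpha> + h1 n - h2 n) \<longlonglongrightarrow> \<alpha> + 0 - 0"
      by (intro tendsto_diff tendsto_add tendsto_const h1 h2)
    moreover have "\<exists>N. \<forall>n\<ge>N. \<gamma> \<le> \<alpha> + h1 n - h2 n"
    proof (intro exI[of _ 1] allI impI)
      fix n :: nat assume n: "1 \<le> n"
      have "Lo n \<le> Up n" using yLo[of n] yUp[of n] by linarith
      hence "- lam * real n powr p - (\<alpha> + h1 n) * real n \<le> - lam * real n powr p - (\<gamma> + h2 n) * real n"
        unfolding Lo_def Up_def by simp
      hence "(\<gamma> + h2 n) * real n \<le> (\<alpha> + h1 n) * real n" by linarith
      hence "\<gamma> + h2 n \<le> \<alpha> + h1 n" using n by (simp add: mult_le_cancel_right)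
      thus "\<gamma> \<le> \<alpha> + h1 n - h2 n" by linarith
    qed
    ultimately show ?thesis using LIMSEQ_le_const by fastforce
  qed
  define FF where "FF = rmax f"
  define GG where "GG = rmax g"
  define H1 where "H1 = rmax (\<lambda>j. h1 j * real j)"
  define H2 where "H2 = rmax (\<lambda>j. h2 j * real j)"
  define D where "D m = \<delta> * real m powr \<kappa> + FF m" for m
  define dd where "dd m = (D m + real t) ^ t / fact t" for m
  define DD where "DD m = lam * p * real m powr s + (\<alpha> - \<gamma>) * real m + \<bar>\<alpha>\<bar> + H1 m + H2 m" for m
  define l where "l k = mpoly_length (P k)" for k
  define A where "A m = ln (dd m) + ln (l 0) - (\<gamma> + h2 m) * real m
      + dd m * (ln (dd m) + ln 2 + \<beta> * real m + GG m + DD m)" for m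
  have l_nonneg: "0 \<le> l k" for k
    unfolding l_def mpoly_length_def by (rule sum_nonneg) simp
  have key: "lam * real m powr p \<le> A m" if m1: "1 \<le> m" for m
  proof -
    define E where "E = {e::nat\<Rightarrow>nat. (\<forall>i\<ge>t. e i = 0) \<and> real (\<Sum>i<t. e i) \<le> D m}"
    define v where "v e = (\<Prod>i<t. \<theta> i ^ e i)" for e
    have supp: "msupp (P k) \<subseteq> E" if k: "k \<le> m" for k
    proof
      fix e assume e: "e \<in> msupp (P k)"
      have z: "\<forall>i\<ge>t. e i = 0" using poly[of k] e unfolding is_mpoly_def by blast
      have "real (\<Sum>i<t. e i) \<le> \<delta> * real k powr \<kappa> + f k"
        using f_deg[of k] e unfolding total_deg_le_def by blast
      also have "\<dots> \<le> \<delta> * real m powr \<kappa> + FF m"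
      proof (rule add_mono)
        show "\<delta> * real k powr \<kappa> \<le> \<delta> * real m powr \<kappa>"
          by (rule mult_left_mono[OF powr_mono2]) (use pos k in auto)
        have "\<bar>f k\<bar> \<le> FF m" unfolding FF_def by (rule rmax_ge[OF k])
        thus "f k \<le> FF m" by linarith
      qed
      finally show "e \<in> E" using z unfolding E_def D_def by blast
    qed
    have Dm0: "0 \<le> D m"
    proof -
      have "msupp (P m) \<noteq> {}"
      proof
        assume "msupp (P m) = {}"
        hence "y m = 0" unfolding y_def mpoly_eval_def by simp
        thus False using ynz by blast
      qed
      then obtain e where "e \<in> msupp (P m)" by blast
      hence "e \<in> E" using supp[of m] by blast
      hence "real (\<Sum>i<t. e i) \<le> D m" unfolding E_def by blast
      thus ?thesis by linarith
    qed
    define N where "N = nat \<lfloor>D m\<rfloor>"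
    define Eb where "Eb = {e::nat\<Rightarrow>nat. (\<forall>i\<ge>t. e i = 0) \<and> (\<Sum>i<t. e i) \<le> N}"
    have EEb: "E \<subseteq> Eb" unfolding E_def Eb_def N_def by (auto intro: le_nat_floor)
    have finEb: "finite Eb" unfolding Eb_def using monos_card by blast
    have finE: "finite E" using finite_subset[OF EEb finEb] .
    have cardE: "real (card E) \<le> dd m"
    proof -
      have "card E \<le> card Eb" by (rule card_mono[OF finEb EEb])
      hence "real (card E) \<le> real (card Eb)" by simp
      also have "\<dots> \<le> real (N + t) ^ t / fact t" unfolding Eb_def by (rule monos_card_real)
      also have "\<dots> \<le> dd m" unfolding dd_def
      proof (rule divide_right_mono[OF power_mono])
        show "real (N + t) \<le> D m + real t" using of_nat_floor[OF Dm0] unfolding N_def by simp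
      qed auto
      finally show ?thesis .
    qed
    have hy: "y k = (\<Sum>e\<in>E. v e * of_int (P k e))" if k: "k \<le> m" for k
    proof -
      have "y k = (\<Sum>e\<in>msupp (P k). real_of_int (P k e) * v e)"
        unfolding y_def mpoly_eval_def v_def ..
      also have "\<dots> = (\<Sum>e\<in>E. real_of_int (P k e) * v e)"
        by (rule sum.mono_neutral_left[OF finE supp[OF k]]) (auto simp: msupp_def)
      also have "\<dots> = (\<Sum>e\<in>E. v e * of_int (P k e))" by (simp add: mult.commute)
      finally show ?thesis .
    qed
    have hl: "\<bar>real_of_int (P k e)\<bar> \<le> l k" for k e
    proof (cases "e \<in> msupp (P k)")
      case True
      have fin: "finite (msupp (P k))" using poly[of k] unfolding is_mpoly_def by blast
      have "real_of_int \<bar>P k e\<bar> \<le> (\<Sum>e\<in>msupp (P k). real_of_int \<bar>P k e\<bar>)"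
        by (rule member_le_sum[OF True _ fin]) simp
      thus ?thesis unfolding l_def mpoly_length_def by simp
    next
      case False
      hence "P k e = 0" unfolding msupp_def by simp
      thus ?thesis using l_nonneg[of k] by simp
    qed
    interpret C: core y P E v l m
    proof
      show "finite E" by (rule finE)
      show "\<And>k. k \<le> m \<Longrightarrow> y k = (\<Sum>e\<in>E. v e * real_of_int (P k e))" by (rule hy)
      show "\<And>k e. k \<le> m \<Longrightarrow> \<bar>real_of_int (P k e)\<bar> \<le> l k" using hl by blast
      show "\<And>k. k \<le> m \<Longrightarrow> y k \<noteq> 0" using ynz by blast
    qed
    obtain K where K: "K \<subseteq> {..<m}" "card K < card E"
      "\<bar>y 0\<bar> \<le> real (card E) * l 0 * (\<bar>y m\<bar> * prod C.F K)"
      using C.core_main by blast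
    have y01: "1 \<le> \<bar>y 0\<bar>" using yLo[of 0] unfolding Lo_def by simp
    define L where "L = exp (\<beta> * real m + GG m)"
    have L1: "1 \<le> L" unfolding L_def using pos(1) rmax_nonneg[of g m] unfolding GG_def by simp
    have lb: "l j \<le> L" if j: "j \<le> m" for j
    proof -
      have "l j \<le> exp (\<beta> * real j + g j)" unfolding l_def by (rule g_len)
      also have "\<dots> \<le> L" unfolding L_def
      proof (subst exp_le_cancel_iff, rule add_mono)
        show "\<beta> * real j \<le> \<beta> * real m" by (rule mult_left_mono) (use j pos in auto)
        have "\<bar>g j\<bar> \<le> GG m" unfolding GG_def by (rule rmax_ge[OF j])
        thus "g j \<le> GG m" by linarith
      qed
      finally show ?thesis .
    qed
    have DD0: "0 \<le> DD m"
    proof -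
      have "0 \<le> lam * p * real m powr s" using pos p_gt by simp
      moreover have "0 \<le> (\<alpha> - \<gamma>) * real m" using ag by simp
      moreover have "0 \<le> H1 m" "0 \<le> H2 m" unfolding H1_def H2_def by (rule rmax_nonneg)+
      ultimately show ?thesis unfolding DD_def by simp
    qed
    have ratio: "\<bar>y k\<bar> / \<bar>y (Suc k)\<bar> \<le> exp (DD m)" if k: "k < m" for k
    proof -
      have "\<bar>y k\<bar> / \<bar>y (Suc k)\<bar> \<le> Up k / Lo (Suc k)"
        by (rule frac_le) (use yUp[of k] yLo[of "Suc k"] Lo_pos[of "Suc k"] in \<open>auto simp: Up_def\<close>)
      also have "\<dots> = exp ((- lam * real k powr p - (\<gamma> + h2 k) * real k)
                    - (- lam * real (Suc k) powr p - (\<alpha> + h1 (Suc k)) * real (Suc k)))"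
        unfolding Up_def Lo_def exp_diff ..
      also have "\<dots> \<le> exp (DD m)"
      proof (subst exp_le_cancel_iff)
        have pw: "real (Suc k) powr p - real k powr p \<le> p * real m powr s"
        proof -
          have "(real k + 1) powr p - real k powr p \<le> p * (real k + 1) powr (p - 1)"
            by (rule powr_diff_bound) (use p_gt in auto)
          also have "\<dots> \<le> p * real m powr s"
          proof (rule mult_left_mono)
            have ps: "p - 1 = s" unfolding p_def by simp
            show "(real k + 1) powr (p - 1) \<le> real m powr s"
              unfolding ps by (rule powr_mono2) (use k s_pos in auto)
          qed (use p_gt in auto)
          finally show ?thesis by (simp add: add.commute)
        qed
        have hh1: "h1 (Suc k) * real (Suc k) \<le> H1 m"
          using rmax_ge[of "Suc k" m "\<lambda>j. h1 j * real j"] k unfolding H1_def by simp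
        have hh2: "- (h2 k * real k) \<le> H2 m"
          using rmax_ge[of k m "\<lambda>j. h2 j * real j"] k unfolding H2_def by simp
        have lp: "lam * (real (Suc k) powr p - real k powr p) \<le> lam * (p * real m powr s)"
          by (rule mult_left_mono[OF pw]) (use pos in auto)
        have ak: "(\<alpha> - \<gamma>) * real k \<le> (\<alpha> - \<gamma>) * real m"
          by (rule mult_left_mono) (use ag k in auto)
        have eq: "(- lam * real k powr p - (\<gamma> + h2 k) * real k)
                    - (- lam * real (Suc k) powr p - (\<alpha> + h1 (Suc k)) * real (Suc k))
              = lam * (real (Suc k) powr p - real k powr p) + (\<alpha> - \<gamma>) * real k + \<alpha>
                 + h1 (Suc k) * real (Suc k) - h2 k * real k"
          by (simp add: algebra_simps)
        show "(- lam * real k powr p - (\<gamma> + h2 k) * real k)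
                    - (- lam * real (Suc k) powr p - (\<alpha> + h1 (Suc k)) * real (Suc k)) \<le> DD m"
          unfolding eq DD_def using lp ak hh1 hh2 by (simp add: mult.assoc)
      qed
      finally show ?thesis .
    qed
    define G where "G = dd m * (2 * L * exp (DD m))"
    have eDD: "1 \<le> exp (DD m)" using DD0 by simp
    have Fb: "C.F k \<le> G" if k: "k \<in> K" for k
    proof -
      have km: "k < m" using K(1) k by auto
      have "\<bar>y k\<bar> * l (Suc k) / \<bar>y (Suc k)\<bar> = (\<bar>y k\<bar> / \<bar>y (Suc k)\<bar>) * l (Suc k)" by simp
      also have "\<dots> \<le> exp (DD m) * L"
        by (rule mult_mono[OF ratio[OF km] lb]) (use km l_nonneg in auto)
      finally have t1: "\<bar>y k\<bar> * l (Suc k) / \<bar>y (Suc k)\<bar> \<le> exp (DD m) * L" .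
      have "1 * L \<le> exp (DD m) * L" by (rule mult_right_mono[OF eDD]) (use L1 in simp)
      hence t2: "l k \<le> exp (DD m) * L" using lb[of k] km by simp
      have s2: "\<bar>y k\<bar> * l (Suc k) / \<bar>y (Suc k)\<bar> + l k \<le> 2 * L * exp (DD m)"
      proof -
        have "2 * L * exp (DD m) = exp (DD m) * L + exp (DD m) * L" by simp
        thus ?thesis using t1 t2 by linarith
      qed
      have "C.F k = real (card E) * (\<bar>y k\<bar> * l (Suc k) / \<bar>y (Suc k)\<bar> + l k)"
        unfolding C.F_def ..
      also have "\<dots> \<le> dd m * (2 * L * exp (DD m))"
        by (rule mult_mono[OF cardE s2]) (use cardE l_nonneg in auto)
      finally show ?thesis unfolding G_def .
    qed
    have Fnn: "0 \<le> C.F k" if k: "k \<in> K" for k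
      using C.F_nonneg K(1) k by auto
    have prodb: "prod C.F K \<le> G ^ card K"
    proof -
      have "prod C.F K \<le> prod (\<lambda>_. G) K" by (rule prod_mono) (use Fb Fnn in auto)
      thus ?thesis by simp
    qed
    have cE1: "1 \<le> real (card E)" using K(2) by simp
    have dd1: "1 \<le> dd m" using cE1 cardE by linarith
    have G1: "1 \<le> G"
    proof -
      have "1 * 1 \<le> L * exp (DD m)" by (rule mult_mono[OF L1 eDD]) (use L1 in simp_all)
      hence "1 \<le> L * exp (DD m)" by simp
      hence "1 \<le> 2 * L * exp (DD m)" by simp
      hence "1 * 1 \<le> dd m * (2 * L * exp (DD m))" using dd1 by (intro mult_mono) auto
      thus ?thesis unfolding G_def by simp
    qed
    define X where "X = real (card E) * l 0 * (\<bar>y m\<bar> * G ^ card K)"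
    have X1: "1 \<le> X"
    proof -
      have "real (card E) * l 0 * (\<bar>y m\<bar> * prod C.F K) \<le> X"
        unfolding X_def
        by (rule mult_left_mono[OF mult_left_mono[OF prodb]]) (use l_nonneg in auto)
      thus ?thesis using y01 K(3) by linarith
    qed
    have l0: "0 < l 0"
    proof (rule ccontr)
      assume "\<not> 0 < l 0"
      hence "l 0 = 0" using l_nonneg[of 0] by linarith
      hence "X = 0" unfolding X_def by simp
      thus False using X1 by simp
    qed
    have ym: "0 < \<bar>y m\<bar>" using ynz[of m] by simp
    have Gp: "0 < G" using G1 by simp
    have lnX: "ln X = ln (real (card E)) + ln (l 0) + ln \<bar>y m\<bar> + real (card K) * ln G"
      unfolding X_def using cE1 l0 ym Gp by (simp add: ln_mult ln_realpow)
    have lnE: "ln (real (card E)) \<le> ln (dd m)" using cE1 cardE by simp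
    have lny: "ln \<bar>y m\<bar> \<le> - lam * real m powr p - (\<gamma> + h2 m) * real m"
    proof -
      have "ln \<bar>y m\<bar> \<le> ln (Up m)" using yUp[of m] ym by simp
      thus ?thesis unfolding Up_def by simp
    qed
    have lnG0: "0 \<le> ln G" using G1 by simp
    have cK: "real (card K) * ln G \<le> dd m * ln G"
    proof (rule mult_right_mono[OF _ lnG0])
      have "real (card K) \<le> real (card E)" using K(2) by simp
      thus "real (card K) \<le> dd m" using cardE by linarith
    qed
    have lnG: "ln G = ln (dd m) + ln 2 + (\<beta> * real m + GG m) + DD m"
      unfolding G_def L_def using dd1 by (simp add: ln_mult)
    have "0 \<le> ln X" using X1 by simp
    hence "0 \<le> ln (dd m) + ln (l 0) + (- lam * real m powr p - (\<gamma> + h2 m) * real m) + dd m * ln G"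
      using lnX lnE lny cK by linarith
    thus ?thesis unfolding A_def lnG by (simp add: algebra_simps)
  qed
  define c where "c = \<delta> ^ t / fact t"
  define w where "w m = real m powr s" for m :: nat
  define u where "u m = dd m / w m" for m
  define \<rho> where "\<rho> = (if s = 1 then 1 else (0::real))"
  have c_pos: "0 < c" unfolding c_def using pos(2) by simp
  have FF0: "0 \<le> FF m" for m unfolding FF_def by (rule rmax_nonneg)
  have w_pos: "0 < w m" if "1 \<le> m" for m unfolding w_def using that by simp
  have w_top: "filterlim w at_top sequentially" unfolding w_def by (rule powr_at_top[OF s_pos])
  have inv_w: "(\<lambda>m. 1 / w m) \<longlonglongrightarrow> 0" by (rule div_top[OF tendsto_const w_top])
  have FFlim: "(\<lambda>m. FF m / real m powr \<kappa>) \<longlonglongrightarrow> 0"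
    unfolding FF_def
    by (rule rmax_o[OF smalloD_tendsto[OF f_o] powr_mono_nat powr_at_top]) (use pos in auto)
  have GGlim: "(\<lambda>m. GG m / real m) \<longlonglongrightarrow> 0"
    unfolding GG_def
  proof (rule rmax_o[OF smalloD_tendsto[OF g_o]])
    show "mono (\<lambda>n. real n)" unfolding mono_def by simp
  qed (rule filterlim_real_sequentially)
  have Hlim: "(\<lambda>m. rmax (\<lambda>j. h j * real j) m / real m) \<longlonglongrightarrow> 0" if h: "h \<longlonglongrightarrow> 0" for h
  proof (rule rmax_o)
    have "\<forall>\<^sub>F n in sequentially. h n = h n * real n / real n"
      unfolding eventually_sequentially by (intro exI[of _ 1]) auto
    thus "(\<lambda>n. h n * real n / real n) \<longlonglongrightarrow> 0" using tendsto_cong h by fastforce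
    show "mono (\<lambda>n. real n)" unfolding mono_def by simp
  qed (rule filterlim_real_sequentially)
  have H1lim: "(\<lambda>m. H1 m / real m) \<longlonglongrightarrow> 0" unfolding H1_def by (rule Hlim[OF h1])
  have H2lim: "(\<lambda>m. H2 m / real m) \<longlonglongrightarrow> 0" unfolding H2_def by (rule Hlim[OF h2])
  have ulim: "u \<longlonglongrightarrow> c"
  proof -
    have "(\<lambda>m. (\<delta> + FF m / real m powr \<kappa> + real t / real m powr \<kappa>) ^ t / fact t) \<longlonglongrightarrow> (\<delta> + 0 + 0) ^ t / fact t"
      by (intro tendsto_divide tendsto_power tendsto_add tendsto_const FFlim
            div_top[OF tendsto_const powr_at_top]) (use pos in auto)
    moreover have "\<forall>\<^sub>F m in sequentially. (\<delta> + FF m / real m powr \<kappa> + real t / real m powr \<kappa>) ^ t / fact t = u m"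
      unfolding eventually_sequentially
    proof (intro exI[of _ 1] allI impI)
      fix m :: nat assume m: "1 \<le> m"
      define q where "q = real m powr \<kappa>"
      have q: "0 < q" unfolding q_def using m by simp
      have wq: "w m = q ^ t"
      proof -
        have "w m = (real m powr \<kappa>) powr real t" unfolding w_def s_def powr_powr by (simp add: mult.commute)
        also have "\<dots> = q ^ t" unfolding q_def by (rule powr_realpow) (use m in simp)
        finally show ?thesis .
      qed
      have "(\<delta> + FF m / q + real t / q) = (D m + real t) / q"
        unfolding D_def q_def[symmetric] using q by (simp add: add_divide_distrib)
      hence "(\<delta> + FF m / q + real t / q) ^ t / fact t = (D m + real t) ^ t / q ^ t / fact t"
        by (simp add: power_divide)
      also have "\<dots> = u m" unfolding u_def dd_def wq by simp
      finally show "(\<delta> + FF m / real m powr \<kappa> + real t / real m powr \<kappa>) ^ t / fact t = u m"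
        unfolding q_def .
    qed
    ultimately show ?thesis unfolding c_def using tendsto_cong by fastforce
  qed
  have lnu: "(\<lambda>m. ln (u m)) \<longlonglongrightarrow> ln c" by (rule tendsto_ln[OF ulim]) (use c_pos in simp)
  have lnlim: "(\<lambda>m. ln (real m) / real m) \<longlonglongrightarrow> 0"
    using filterlim_compose[OF ln_x_over_x_tendsto_0 filterlim_real_sequentially] by simp
  have lnddlim: "(\<lambda>m. ln (dd m) / real m) \<longlonglongrightarrow> 0"
  proof -
    have "(\<lambda>m. ln (u m) / real m + s * (ln (real m) / real m)) \<longlonglongrightarrow> 0 + s * 0"
      by (intro tendsto_add tendsto_mult tendsto_const lnlim div_top[OF lnu filterlim_real_sequentially])
    moreover have "\<forall>\<^sub>F m in sequentially. ln (u m) / real m + s * (ln (real m) / real m) = ln (dd m) / real m"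
      unfolding eventually_sequentially
    proof (intro exI[of _ 1] allI impI)
      fix m :: nat assume m: "1 \<le> m"
      have "0 \<le> \<delta> * real m powr \<kappa>" using pos(2) by simp
      hence Dt: "0 < D m + real t" unfolding D_def using FF0[of m] tpos by linarith
      have ddp: "0 < dd m" unfolding dd_def using Dt by simp
      have "dd m = u m * w m" unfolding u_def using w_pos[OF m] by simp
      hence "ln (dd m) = ln (u m) + ln (w m)"
        using ddp w_pos[OF m] by (simp add: ln_mult zero_less_mult_iff)
      also have "ln (w m) = s * ln (real m)" unfolding w_def by simp
      finally show "ln (u m) / real m + s * (ln (real m) / real m) = ln (dd m) / real m"
        by (simp add: add_divide_distrib)
    qed
    ultimately show ?thesis using tendsto_cong by fastforce
  qed
  have rholim: "(\<lambda>m. real m powr (s - 1)) \<longlonglongrightarrow> \<rho>"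
  proof (cases "s = 1")
    case True
    have "\<forall>\<^sub>F m in sequentially. 1 = real m powr (s - 1)"
      unfolding eventually_sequentially True by (intro exI[of _ 1]) auto
    thus ?thesis unfolding \<rho>_def using True tendsto_cong[of "\<lambda>_. 1"] by fastforce
  next
    case False
    hence "s - 1 < 0" using s_le by simp
    hence "(\<lambda>m. real m powr (s - 1)) \<longlonglongrightarrow> 0"
      by (rule tendsto_neg_powr) (rule filterlim_real_sequentially)
    thus ?thesis unfolding \<rho>_def using False by simp
  qed
  define R where "R m = (ln (dd m) / real m) * (1 / w m) + ln (l 0) / real m powr p - (\<gamma> + h2 m) / w m
        + u m * (ln (dd m) / real m + ln 2 / real m + GG m / real m + \<bar>\<alpha>\<bar> / real m + H1 m / real m + H2 m / real m)
        + u m * (\<beta> + (\<alpha> - \<gamma>)) + u m * (lam * p * real m powr (s - 1))" for m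
  define Lm where "Lm = 0 * 0 + 0 - 0 + c * (0 + 0 + 0 + 0 + 0 + 0) + c * (\<beta> + (\<alpha> - \<gamma>)) + c * (lam * p * \<rho>)"
  have Rlim: "R \<longlonglongrightarrow> Lm"
    unfolding R_def Lm_def
    by (intro tendsto_add tendsto_diff tendsto_mult tendsto_const lnddlim inv_w ulim GGlim H1lim H2lim rholim
          div_top[OF tendsto_const powr_at_top] div_top[OF tendsto_const filterlim_real_sequentially]
          div_top[OF tendsto_add[OF tendsto_const h2] w_top]) (use p_gt in auto)
  have R_eq: "R m = A m / real m powr p" if m: "1 \<le> m" for m
  proof -
    define M where "M = real m"
    define W where "W = w m"
    have M: "0 < M" unfolding M_def using m by simp
    have W: "0 < W" unfolding W_def using w_pos[OF m] .
    have mp: "M powr p = M * W" unfolding p_def M_def W_def w_def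
      using m by (simp add: powr_add)
    have ms: "M powr (s - 1) = W / M" unfolding M_def W_def w_def
      using m by (simp add: powr_diff)
    have msW: "M powr s = W" unfolding M_def W_def w_def ..
    have alg: "\<And>a b g d l2 G aa hh hh' q. (a + b - g * M + d * (a + l2 + \<beta> * M + G + (lam * p * W + q * M + aa + hh + hh'))) / (M * W)
       = (a / M) * (1 / W) + b / (M * W) - g / W + (d / W) * (a / M + l2 / M + G / M + aa / M + hh / M + hh' / M)
         + (d / W) * (\<beta> + q) + (d / W) * (lam * p * (W / M))"
      using M W by (simp add: field_simps)
    show ?thesis
      unfolding R_def A_def DD_def u_def
      unfolding W_def[symmetric] M_def[symmetric]
      unfolding mp ms msW
      by (rule alg[symmetric])
  qed
  have lam_le: "lam \<le> Lm"
  proof (rule LIMSEQ_le_const[OF Rlim])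
    show "\<exists>N. \<forall>n\<ge>N. lam \<le> R n"
    proof (intro exI[of _ 1] allI impI)
      fix n :: nat assume n: "1 \<le> n"
      have pp: "0 < real n powr p" using n by simp
      have "lam * real n powr p \<le> A n" by (rule key[OF n])
      hence "lam \<le> A n / real n powr p" using pp by (simp add: pos_le_divide_eq)
      thus "lam \<le> R n" using R_eq[OF n] by simp
    qed
  qed
  have Lm_eq: "Lm = c * (\<alpha> + \<beta> - \<gamma>) + c * lam * p * \<rho>" unfolding Lm_def by (simp add: algebra_simps)
  show ?thesis
  proof (intro conjI impI)
    assume k: "\<kappa> = 1 / real t"
    have s1: "s = 1" unfolding s_def k using tpos by simp
    have "lam \<le> c * (\<alpha> + \<beta> - \<gamma>) + 2 * (lam * c)"
      using lam_le unfolding Lm_eq \<rho>_def p_def using s1 by (simp add: algebra_simps)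
    moreover have "lam * (1 - 2 * \<delta> ^ t / fact t) = lam - 2 * (lam * c)"
      unfolding c_def by (simp add: algebra_simps)
    moreover have "\<delta> ^ t * (\<alpha> + \<beta> - \<gamma>) / fact t = c * (\<alpha> + \<beta> - \<gamma>)"
      unfolding c_def by simp
    ultimately show "lam * (1 - 2 * \<delta> ^ t / fact t) \<le> \<delta> ^ t * (\<alpha> + \<beta> - \<gamma>) / fact t" by linarith
  next
    assume k: "\<kappa> < 1 / real t"
    have "s < real t * (1 / real t)" unfolding s_def by (rule mult_strict_left_mono[OF k tpos])
    hence s1: "s \<noteq> 1" using tpos by simp
    have "lam \<le> c * (\<alpha> + \<beta> - \<gamma>)"
      using lam_le unfolding Lm_eq \<rho>_def using s1 by simp
    moreover have "\<delta> ^ t * (\<alpha> + \<beta> - \<gamma>) / fact t = c * (\<alpha> + \<beta> - \<gamma>)"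
      unfolding c_def by simp
    ultimately show "lam \<le> \<delta> ^ t * (\<alpha> + \<beta> - \<gamma>) / fact t" by linarith
  qed
qed

end
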